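(* Let $\mathcal{G}=(\mathbf{V},\mathbf{E})$ be the directed mixed graph (DMG) of a simple structural causal model (SCM) whose distribution is $\sigma$-faithful to $\mathcal{G}$. Let $\mathbf{S}\subseteq\mathbf{V}$ be the set of selection bias variables, and let $V,W,X,Y\in\mathbf{V}\setminus\mathbf{S}$ be four distinct variables. Suppose that $$V \perp\!\!\!\perp Y \mid \mathbf{S}\cup[\{X\}] \qquad\text{and}\qquad V \not\perp\!\!\!\perp W \mid \mathbf{S}\cup[\{X\}],$$ i.e. (i) $V \perp\!\!\!\perp Y \mid \{X\}\cup\mathbf{S}$ and $V\not\perp\!\!\!\perp Y\mid \mathbf{S}$, and (ii) $V\not\perp\!\!\!\perp W\mid\{X\}\cup\mathbf{S}$ and $V\perp\!\!\!\perp W\mid\mathbf{S}$. Then $X\in\mathrm{an}(Y)$, $Y\notin\mathrm{an}(X)$, $X\notin\mathrm{an}(\mathbf{S})$, and $X$ and $Y$ are unconfounded (there is no bidirected edge $X\leftrightarrow Y$ in $\mathcal{G}$).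
   Context: A directed mixed graph (DMG) $\mathcal{G}=(\mathbf{V},\mathbf{E})$ has nodes $\mathbf{V}$ (random variables) and edges that are directed ($\to$) or bidirected ($\leftrightarrow$) between distinct nodes; cycles are allowed. Directed edges represent direct causal relations, bidirected edges represent latent confounding. $X$ is an ancestor of $Y$ ($X\in\mathrm{an}(Y)$) if there is a directed path from $X$ to $Y$ (every node is its own ancestor); for a set, $\mathrm{an}(\mathbf{X})=\bigcup_{X\in\mathbf{X}}\mathrm{an}(X)$. The strongly connected component of $X$ is $\mathrm{an}(X)\cap\mathrm{de}(X)$. A collider on a walk is a node $X$ with both adjacent edge marks being arrowheads into $X$. A walk between $X$ and $Y$ is $\sigma$-blocked by $\mathbf{C}\subseteq\mathbf{V}$ if $X$ or $Y$ is in $\mathbf{C}$, or the walk contains a collider not in $\mathrm{an}(\mathbf{C})$, or it contains a non-collider in $\mathbf{C}$ that points (with a directed edge) to an adjacent node on the walk lying in a different strongly connected component; $X$ and $Y$ are $\sigma$-separated by $\mathbf{C}$ if every walk between them is $\sigma$-blocked. A simple SCM is one whose DMG satisfies the $\sigma$-separation Markov property (σ-separation implies conditional independence); $\sigma$-faithfulness means conversely that every conditional independence in the distribution corresponds to a $\sigma$-separation, so conditional independences coincide exactly with $\sigma$-separations. Selection bias variables $\mathbf{S}$ are unobserved variables of the model on which the data are implicitly conditioned (samples are included depending on $\mathbf{S}$). Notation for disjoint sets $\{X\},\{Y\},\mathbf{W},\mathbf{Z}$: the minimal conditional independence $X\perp\!\!\!\perp Y\mid \mathbf{W}\cup[\mathbf{Z}]$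 means $X\perp\!\!\!\perp Y\mid\mathbf{W}\cup\mathbf{Z}$ and $X\not\perp\!\!\!\perp Y\mid\mathbf{W}\cup\mathbf{Z}'$ for every proper subset $\mathbf{Z}'\subsetneq\mathbf{Z}$; the minimal conditional dependence $X\not\perp\!\!\!\perp Y\mid\mathbf{W}\cup[\mathbf{Z}]$ means $X\not\perp\!\!\!\perp Y\mid\mathbf{W}\cup\mathbf{Z}$ and $X\perp\!\!\!\perp Y\mid\mathbf{W}\cup\mathbf{Z}'$ for every $\mathbf{Z}'\subsetneq\mathbf{Z}$. *)

theory Defs
  imports Main
begin

text \<open>A directed mixed graph (DMG) on vertex set Vs: directed edges Ds (pair (a,b) means a \<rightarrow> b),
  bidirected edges Bs (symmetric; (a,b) means a \<leftrightarrow> b).\<close>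

definition dmg :: "'v set \<Rightarrow> ('v \<times> 'v) set \<Rightarrow> ('v \<times> 'v) set \<Rightarrow> bool" where
  "dmg Vs Ds Bs \<longleftrightarrow> finite Vs \<and> Ds \<subseteq> Vs \<times> Vs \<and> Bs \<subseteq> Vs \<times> Vs \<and> sym Bs
     \<and> (\<forall>a. (a,a) \<notin> Ds) \<and> (\<forall>a. (a,a) \<notin> Bs)"

definition anc :: "('v \<times> 'v) set \<Rightarrow> 'v set \<Rightarrow> 'v set" where
  "anc Ds A = {a. \<exists>b\<in>A. (a,b) \<in> Ds\<^sup>*}"

definition same_scc :: "('v \<times> 'v) set \<Rightarrow> 'v \<Rightarrow> 'v \<Rightarrow> bool" where
  "same_scc Ds a b \<longleftrightarrow> (a,b) \<in> Ds\<^sup>* \<and> (b,a) \<in> Ds\<^sup>*"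

text \<open>Kind of the edge used in a walk step from node a to the next node b:
  Fwd: a \<rightarrow> b, Bwd: a \<leftarrow> b, Bid: a \<leftrightarrow> b.\<close>

datatype ekind = Fwd | Bwd | Bid

definition is_walk :: "('v \<times> 'v) set \<Rightarrow> ('v \<times> 'v) set \<Rightarrow> 'v list \<Rightarrow> ekind list \<Rightarrow> bool" where
  "is_walk Ds Bs ns ks \<longleftrightarrow> length ns = Suc (length ks) \<and>
     (\<forall>i < length ks. (case ks!i of
         Fwd \<Rightarrow> (ns!i, ns!Suc i) \<in> Ds
       | Bwd \<Rightarrow> (ns!Suc i, ns!i) \<in> Ds
       | Bid \<Rightarrow> (ns!i, ns!Suc i) \<in> Bs))"

definition collider :: "ekind list \<Rightarrow> nat \<Rightarrow> bool" where
  "collider ks i \<longleftrightarrow> 0 < i \<and> i < length ks \<and> ks!(i - 1) \<in> {Fwd, Bid} \<and> ks!i \<in> {Bwd, Bid}"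

definition sigma_blocked :: "('v \<times> 'v) set \<Rightarrow> 'v set \<Rightarrow> 'v list \<Rightarrow> ekind list \<Rightarrow> bool" where
  "sigma_blocked Ds C ns ks \<longleftrightarrow>
     hd ns \<in> C \<or> last ns \<in> C \<or>
     (\<exists>i. collider ks i \<and> ns!i \<notin> anc Ds C) \<or>
     (\<exists>i < length ns. \<not> collider ks i \<and> ns!i \<in> C \<and>
        ((i < length ks \<and> ks!i = Fwd \<and> \<not> same_scc Ds (ns!i) (ns!Suc i)) \<or>
         (0 < i \<and> ks!(i - 1) = Bwd \<and> \<not> same_scc Ds (ns!i) (ns!(i - 1)))))"

definition sigma_sep :: "('v \<times> 'v) set \<Rightarrow> ('v \<times> 'v) set \<Rightarrow> 'v \<Rightarrow> 'v \<Rightarrow> 'v set \<Rightarrow> bool" where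
  "sigma_sep Ds Bs x y C \<longleftrightarrow>
     (\<forall>ns ks. is_walk Ds Bs ns ks \<and> hd ns = x \<and> last ns = y \<longrightarrow> sigma_blocked Ds C ns ks)"

end

theory Submission
  imports Defs
begin


definition lft :: "'v list \<Rightarrow> ekind list \<Rightarrow> nat \<Rightarrow> (ekind \<times> 'v) option" where
  "lft ns ks k = (if 0 < k then Some (ks!(k-1), ns!(k-1)) else None)"
definition rgt :: "'v list \<Rightarrow> ekind list \<Rightarrow> nat \<Rightarrow> (ekind \<times> 'v) option" where
  "rgt ns ks k = (if k < length ks then Some (ks!k, ns!Suc k) else None)"
definition iscol :: "(ekind \<times> 'v) option \<Rightarrow> (ekind \<times> 'v) option \<Rightarrow> bool" where
  "iscol l r \<longleftrightarrow> (case l of Some p \<Rightarrow> fst p \<in> {Fwd,Bid} | None \<Rightarrow> False) \<and>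
                 (case r of Some p \<Rightarrow> fst p \<in> {Bwd,Bid} | None \<Rightarrow> False)"
definition blk :: "('v \<times> 'v) set \<Rightarrow> (ekind \<times> 'v) option \<Rightarrow> 'v \<Rightarrow> (ekind \<times> 'v) option \<Rightarrow> bool" where
  "blk Ds l x r \<longleftrightarrow> (case r of Some p \<Rightarrow> fst p = Fwd \<and> \<not> same_scc Ds x (snd p) | None \<Rightarrow> False) \<or>
                    (case l of Some p \<Rightarrow> fst p = Bwd \<and> \<not> same_scc Ds x (snd p) | None \<Rightarrow> False)"
definition okl :: "('v \<times> 'v) set \<Rightarrow> 'v set \<Rightarrow> (ekind \<times> 'v) option \<Rightarrow> 'v \<Rightarrow> (ekind \<times> 'v) option \<Rightarrow> bool" where
  "okl Ds C l x r \<longleftrightarrow> (iscol l r \<longrightarrow> x \<in> anc Ds C) \<and> (\<not> iscol l r \<and> x \<in> C \<longrightarrow> \<not> blk Ds l x r)"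

definition opn :: "('v \<times> 'v) set \<Rightarrow> 'v set \<Rightarrow> 'v list \<Rightarrow> ekind list \<Rightarrow> bool" where
  "opn Ds C ns ks \<longleftrightarrow> hd ns \<notin> C \<and> last ns \<notin> C \<and>
     (\<forall>k<length ns. okl Ds C (lft ns ks k) (ns!k) (rgt ns ks k))"

lemma collider_iff: "collider ks k \<longleftrightarrow> iscol (lft ns ks k) (rgt ns ks k)"
  by (auto simp: collider_def iscol_def lft_def rgt_def)

lemma open_iff:
  assumes "length ns = Suc (length ks)"
  shows "\<not> sigma_blocked Ds C ns ks \<longleftrightarrow> opn Ds C ns ks"
proof -
  have c: "collider ks i \<Longrightarrow> i < length ns" for i using assms by (simp add: collider_def)
  have a: "(\<exists>i. collider ks i \<and> ns!i \<notin> anc Ds C) \<longleftrightarrow>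
       (\<exists>i<length ns. iscol (lft ns ks i) (rgt ns ks i) \<and> ns!i \<notin> anc Ds C)"
    using c collider_iff by metis
  have b: "((i < length ks \<and> ks!i = Fwd \<and> \<not> same_scc Ds (ns!i) (ns!Suc i)) \<or>
         (0 < i \<and> ks!(i - 1) = Bwd \<and> \<not> same_scc Ds (ns!i) (ns!(i - 1)))) \<longleftrightarrow>
         blk Ds (lft ns ks i) (ns!i) (rgt ns ks i)" for i
    by (simp add: blk_def lft_def rgt_def)
  have d: "(\<forall>k<length ns. okl Ds C (lft ns ks k) (ns!k) (rgt ns ks k)) \<longleftrightarrow>
     \<not>(\<exists>i<length ns. iscol (lft ns ks i) (rgt ns ks i) \<and> ns!i \<notin> anc Ds C) \<and>
     \<not>(\<exists>i<length ns. \<not> iscol (lft ns ks i) (rgt ns ks i) \<and> ns!i \<in> C \<and> blk Ds (lft ns ks i) (ns!i) (rgt ns ks i))"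
    unfolding okl_def by auto
  show ?thesis unfolding sigma_blocked_def opn_def a b d by (simp only: de_Morgan_disj collider_iff[where ns=ns])
qed

lemma walk_len: "is_walk Ds Bs ns ks \<Longrightarrow> length ns = Suc (length ks)"
  by (simp add: is_walk_def)

lemma walk_hd: "is_walk Ds Bs ns ks \<Longrightarrow> hd ns = ns!0"
  by (cases ns) (auto simp: is_walk_def)

lemma walk_last: "is_walk Ds Bs ns ks \<Longrightarrow> last ns = ns!(length ks)"
  by (cases ns rule: rev_cases) (auto simp: is_walk_def nth_append)

lemma walk_step: "is_walk Ds Bs ns ks \<Longrightarrow> i < length ks \<Longrightarrow> ks!i = Fwd \<Longrightarrow> (ns!i, ns!Suc i) \<in> Ds"
  unfolding is_walk_def by (metis ekind.simps(7))

lemma walk_stepB: "is_walk Ds Bs ns ks \<Longrightarrow> i < length ks \<Longrightarrow> ks!i = Bwd \<Longrightarrow> (ns!Suc i, ns!i) \<in> Ds"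
  unfolding is_walk_def by (metis ekind.simps(8))

lemma walk_stepI: "is_walk Ds Bs ns ks \<Longrightarrow> i < length ks \<Longrightarrow> ks!i = Bid \<Longrightarrow> (ns!i, ns!Suc i) \<in> Bs"
  unfolding is_walk_def by (metis ekind.simps(9))

lemma anc_step: "(x,y) \<in> Ds \<Longrightarrow> y \<in> anc Ds A \<Longrightarrow> x \<in> anc Ds A"
  unfolding anc_def by (auto intro: converse_rtrancl_into_rtrancl)

lemma anc_mono: "A \<subseteq> B \<Longrightarrow> anc Ds A \<subseteq> anc Ds B"
  unfolding anc_def by auto

lemma anc_self: "x \<in> A \<Longrightarrow> x \<in> anc Ds A"
  unfolding anc_def by auto

lemma anc_insert_absorb: "X \<in> anc Ds S \<Longrightarrow> anc Ds (insert X S) = anc Ds S"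
  unfolding anc_def by (auto intro: rtrancl_trans)

lemma okl_mono1: "okl Ds C l x r \<Longrightarrow> x \<noteq> X \<Longrightarrow> okl Ds (insert X C) l x r"
  unfolding okl_def using anc_mono[of C "insert X C" Ds] by auto

lemma okl_down: "okl Ds (insert X C) l x r \<Longrightarrow> (iscol l r \<Longrightarrow> x \<in> anc Ds C) \<Longrightarrow> okl Ds C l x r"
  unfolding okl_def by auto

lemma cat_nth1: "length ns1 = Suc n1 \<Longrightarrow> k \<le> n1 \<Longrightarrow> (ns1 @ tl ns2)!k = ns1!k"
  by (simp add: nth_append)

definition eok :: "('v \<times> 'v) set \<Rightarrow> ('v \<times> 'v) set \<Rightarrow> ekind \<Rightarrow> 'v \<Rightarrow> 'v \<Rightarrow> bool" where
  "eok Ds Bs k a b = (case k of Fwd \<Rightarrow> (a, b) \<in> Ds | Bwd \<Rightarrow> (b, a) \<in> Ds | Bid \<Rightarrow> (a, b) \<in> Bs)"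

lemma is_walk_alt: "is_walk Ds Bs ns ks \<longleftrightarrow> length ns = Suc (length ks) \<and>
   (\<forall>i<length ks. eok Ds Bs (ks!i) (ns!i) (ns!Suc i))"
  unfolding is_walk_def eok_def by simp

lemma cat_nth2: "length ns1 = Suc n1 \<Longrightarrow> last ns1 = hd ns2 \<Longrightarrow> ns2 \<noteq> [] \<Longrightarrow> n1 \<le> k \<Longrightarrow>
   (ns1 @ tl ns2)!k = ns2!(k - n1)"
proof (cases "k = n1")
  case True
  assume a: "length ns1 = Suc n1" "last ns1 = hd ns2" "ns2 \<noteq> []"
  have "ns1 \<noteq> []" using a by auto
  then have "last ns1 = ns1!n1" using a by (simp add: last_conv_nth)
  then show ?thesis using True a by (simp add: nth_append hd_conv_nth)
next
  case False
  assume a: "length ns1 = Suc n1" "last ns1 = hd ns2" "ns2 \<noteq> []" "n1 \<le> k"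
  then obtain d where d: "k = Suc n1 + d" using False by (metis add_Suc le_Suc_ex le_neq_implies_less less_eq_Suc_le)
  have "tl ns2 ! d = ns2 ! Suc d" using a by (cases ns2) auto
  then show ?thesis using a d by (simp add: nth_append)
qed

lemma cat_walk:
  assumes w1: "is_walk Ds Bs ns1 ks1" and w2: "is_walk Ds Bs ns2 ks2" and j: "last ns1 = hd ns2"
  shows "is_walk Ds Bs (ns1 @ tl ns2) (ks1 @ ks2)"
proof -
  have l1: "length ns1 = Suc (length ks1)" and l2: "length ns2 = Suc (length ks2)"
    using w1 w2 by (auto simp: is_walk_def)
  have ne: "ns2 \<noteq> []" using l2 by auto
  have n1: "\<And>k. k \<le> length ks1 \<Longrightarrow> (ns1 @ tl ns2)!k = ns1!k" using cat_nth1[OF l1] by blast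
  have n2: "\<And>k. length ks1 \<le> k \<Longrightarrow> (ns1 @ tl ns2)!k = ns2!(k - length ks1)" using cat_nth2[OF l1 j ne] by blast
  show ?thesis unfolding is_walk_alt
  proof (intro conjI allI impI)
    show "length (ns1 @ tl ns2) = Suc (length (ks1 @ ks2))" using l1 l2 by simp
    fix i assume i: "i < length (ks1 @ ks2)"
    show "eok Ds Bs ((ks1 @ ks2) ! i) ((ns1 @ tl ns2) ! i) ((ns1 @ tl ns2) ! Suc i)"
    proof (cases "i < length ks1")
      case True
      then have "eok Ds Bs (ks1 ! i) (ns1 ! i) (ns1 ! Suc i)" using w1 by (simp add: is_walk_alt)
      then show ?thesis using True n1[of i] n1[of "Suc i"] by (simp add: nth_append)
    next
      case False
      then have a: "i - length ks1 < length ks2" "Suc i - length ks1 = Suc (i - length ks1)" using i by auto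
      then have "eok Ds Bs (ks2 ! (i - length ks1)) (ns2 ! (i - length ks1)) (ns2 ! Suc (i - length ks1))"
        using w2 by (simp add: is_walk_alt)
      then show ?thesis using False a n2[of i] n2[of "Suc i"] by (simp add: nth_append)
    qed
  qed
qed

lemma cat_lft1: "length ns1 = Suc (length ks1) \<Longrightarrow> k \<le> length ks1 \<Longrightarrow>
   lft (ns1 @ tl ns2) (ks1 @ ks2) k = lft ns1 ks1 k"
  by (auto simp: lft_def nth_append)

lemma cat_rgt1: "length ns1 = Suc (length ks1) \<Longrightarrow> k < length ks1 \<Longrightarrow>
   rgt (ns1 @ tl ns2) (ks1 @ ks2) k = rgt ns1 ks1 k"
  by (auto simp: rgt_def nth_append)

lemma cat_rgt2: "length ns1 = Suc (length ks1) \<Longrightarrow> last ns1 = hd ns2 \<Longrightarrow> ns2 \<noteq> [] \<Longrightarrow> length ks1 \<le> k \<Longrightarrow>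
   rgt (ns1 @ tl ns2) (ks1 @ ks2) k = rgt ns2 ks2 (k - length ks1)"
  using cat_nth2[of ns1 "length ks1" ns2 "Suc k"]
  by (auto simp: rgt_def nth_append Suc_diff_le)

lemma cat_lft2: "length ns1 = Suc (length ks1) \<Longrightarrow> last ns1 = hd ns2 \<Longrightarrow> ns2 \<noteq> [] \<Longrightarrow> length ks1 < k \<Longrightarrow>
   lft (ns1 @ tl ns2) (ks1 @ ks2) k = lft ns2 ks2 (k - length ks1)"
  using cat_nth2[of ns1 "length ks1" ns2 "k - 1"]
  by (auto simp: lft_def nth_append)

lemma take_walk: assumes "is_walk Ds Bs ns ks" "i \<le> length ks" shows "is_walk Ds Bs (take (Suc i) ns) (take i ks)"
  unfolding is_walk_alt
proof (intro conjI allI impI)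
  show "length (take (Suc i) ns) = Suc (length (take i ks))" using assms by (simp add: is_walk_alt)
  fix m assume m: "m < length (take i ks)"
  then have "eok Ds Bs (ks!m) (ns!m) (ns!Suc m)" using assms by (simp add: is_walk_alt)
  then show "eok Ds Bs (take i ks ! m) (take (Suc i) ns ! m) (take (Suc i) ns ! Suc m)" using m by simp
qed

lemma drop_walk: assumes "is_walk Ds Bs ns ks" "j \<le> length ks" shows "is_walk Ds Bs (drop j ns) (drop j ks)"
  unfolding is_walk_alt
proof (intro conjI allI impI)
  show "length (drop j ns) = Suc (length (drop j ks))" using assms by (simp add: is_walk_alt)
  fix m assume m: "m < length (drop j ks)"
  then have "eok Ds Bs (ks!(j+m)) (ns!(j+m)) (ns!Suc (j+m))" using assms by (simp add: is_walk_alt)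
  then show "eok Ds Bs (drop j ks ! m) (drop j ns ! m) (drop j ns ! Suc m)" using m assms by (simp add: is_walk_alt)
qed

lemma take_lft: "k \<le> i \<Longrightarrow> i \<le> length ks \<Longrightarrow> lft (take (Suc i) ns) (take i ks) k = lft ns ks k"
  by (auto simp: lft_def)

lemma take_rgt: "k < i \<Longrightarrow> i \<le> length ks \<Longrightarrow> rgt (take (Suc i) ns) (take i ks) k = rgt ns ks k"
  by (auto simp: rgt_def)

lemma drop_lft: "0 < m \<Longrightarrow> length ns = Suc (length ks) \<Longrightarrow> j \<le> length ks \<Longrightarrow> lft (drop j ns) (drop j ks) m = lft ns ks (j + m)"
  by (auto simp: lft_def)

lemma drop_rgt: "length ns = Suc (length ks) \<Longrightarrow> j \<le> length ks \<Longrightarrow> rgt (drop j ns) (drop j ks) m = rgt ns ks (j + m)"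
  by (auto simp: rgt_def)

lemma fwd_path:
  assumes "(a,b) \<in> Ds\<^sup>*"
  shows "\<exists>ns. ns \<noteq> [] \<and> hd ns = a \<and> last ns = b \<and> is_walk Ds Bs ns (replicate (length ns - 1) Fwd) \<and>
     (\<forall>z\<in>set ns. (a,z) \<in> Ds\<^sup>* \<and> (z,b) \<in> Ds\<^sup>*)"
  using assms
proof (induction rule: converse_rtrancl_induct)
  case base
  show ?case by (rule exI[of _ "[b]"]) (simp add: is_walk_def)
next
  case (step a a')
  then obtain ns where ns: "ns \<noteq> []" "hd ns = a'" "last ns = b"
    "is_walk Ds Bs ns (replicate (length ns - 1) Fwd)" "\<forall>z\<in>set ns. (a',z) \<in> Ds\<^sup>* \<and> (z,b) \<in> Ds\<^sup>*"
    by blast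
  have w: "is_walk Ds Bs (a # ns) (replicate (length (a # ns) - 1) Fwd)"
    unfolding is_walk_alt
  proof (intro conjI allI impI)
    show "length (a # ns) = Suc (length (replicate (length (a # ns) - 1) Fwd))" by simp
    fix i assume i: "i < length (replicate (length (a # ns) - 1) Fwd)"
    show "eok Ds Bs (replicate (length (a # ns) - 1) Fwd ! i) ((a # ns) ! i) ((a # ns) ! Suc i)"
    proof (cases i)
      case 0
      then show ?thesis using step(1) ns(1,2) by (simp add: eok_def hd_conv_nth)
    next
      case (Suc m)
      then have "m < length (replicate (length ns - 1) Fwd)" using i by simp
      then have "eok Ds Bs Fwd (ns!m) (ns!Suc m)" using ns(4) unfolding is_walk_alt by auto
      then show ?thesis using Suc i by simp
    qed
  qed
  show ?case
    apply (rule exI[of _ "a # ns"])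
    using w ns step(1,2) by (auto intro: converse_rtrancl_into_rtrancl)
qed

lemma bwd_path:
  assumes "(c,v) \<in> Ds\<^sup>*"
  shows "\<exists>ns. ns \<noteq> [] \<and> hd ns = v \<and> last ns = c \<and> is_walk Ds Bs ns (replicate (length ns - 1) Bwd) \<and>
     (\<forall>z\<in>set ns. (c,z) \<in> Ds\<^sup>*)"
  using assms
proof (induction rule: rtrancl_induct)
  case base
  show ?case by (rule exI[of _ "[c]"]) (simp add: is_walk_def)
next
  case (step b' b)
  then obtain ns where ns: "ns \<noteq> []" "hd ns = b'" "last ns = c"
    "is_walk Ds Bs ns (replicate (length ns - 1) Bwd)" "\<forall>z\<in>set ns. (c,z) \<in> Ds\<^sup>*"
    by blast
  have w: "is_walk Ds Bs (b # ns) (replicate (length (b # ns) - 1) Bwd)"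
    unfolding is_walk_alt
  proof (intro conjI allI impI)
    show "length (b # ns) = Suc (length (replicate (length (b # ns) - 1) Bwd))" by simp
    fix i assume i: "i < length (replicate (length (b # ns) - 1) Bwd)"
    show "eok Ds Bs (replicate (length (b # ns) - 1) Bwd ! i) ((b # ns) ! i) ((b # ns) ! Suc i)"
    proof (cases i)
      case 0
      then show ?thesis using step(2) ns(1,2) by (simp add: eok_def hd_conv_nth)
    next
      case (Suc m)
      then have "m < length (replicate (length ns - 1) Bwd)" using i by simp
      then have "eok Ds Bs Bwd (ns!m) (ns!Suc m)" using ns(4) unfolding is_walk_alt by auto
      then show ?thesis using Suc i by simp
    qed
  qed
  show ?case
    apply (rule exI[of _ "b # ns"])
    using w ns step by (auto intro: rtrancl_into_rtrancl)
qed

lemma bwd_anc: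
  assumes w: "is_walk Ds Bs ns ks" and op: "\<forall>k<length ns. okl Ds C (lft ns ks k) (ns!k) (rgt ns ks k)"
  shows "0 < k \<Longrightarrow> k < length ns \<Longrightarrow> ks!(k-1) = Bwd \<Longrightarrow> ns!k \<in> anc Ds (insert (hd ns) C)"
proof (induction k)
  case 0
  then show ?case by simp
next
  case (Suc k)
  have len: "length ns = Suc (length ks)" using w by (simp add: is_walk_def)
  have e: "(ns!Suc k, ns!k) \<in> Ds" using walk_stepB[OF w, of k] Suc.prems len by simp
  show ?case
  proof (cases "k = 0")
    case True
    then have "ns!k \<in> anc Ds (insert (hd ns) C)" using walk_hd[OF w] by (simp add: anc_self)
    then show ?thesis using e anc_step by metis
  next
    case False
    show ?thesis
    proof (cases "ks!(k-1) = Bwd")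
      case True
      then have "ns!k \<in> anc Ds (insert (hd ns) C)" using Suc False by simp
      then show ?thesis using e anc_step by metis
    next
      case nb: False
      have "iscol (lft ns ks k) (rgt ns ks k)"
        using nb False Suc.prems len by (cases "ks!(k-1)") (auto simp: iscol_def lft_def rgt_def)
      then have "ns!k \<in> anc Ds C" using op Suc.prems unfolding okl_def by auto
      then have "ns!k \<in> anc Ds (insert (hd ns) C)" using anc_mono[of C "insert (hd ns) C" Ds] by auto
      then show ?thesis using e anc_step by metis
    qed
  qed
qed

lemma fwd_anc:
  assumes w: "is_walk Ds Bs ns ks" and op: "\<forall>k<length ns. okl Ds C (lft ns ks k) (ns!k) (rgt ns ks k)"
  shows "k < length ks \<Longrightarrow> ks!k = Fwd \<Longrightarrow> ns!k \<in> anc Ds (insert (last ns) C)"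
proof (induction "length ks - k" arbitrary: k)
  case 0
  then show ?case by simp
next
  case (Suc d)
  have len: "length ns = Suc (length ks)" using w by (simp add: is_walk_def)
  have e: "(ns!k, ns!Suc k) \<in> Ds" using walk_step[OF w, of k] Suc.prems by simp
  show ?case
  proof (cases "Suc k = length ks")
    case True
    then have "ns!Suc k \<in> anc Ds (insert (last ns) C)" using walk_last[OF w] by (simp add: anc_self)
    then show ?thesis using e anc_step by metis
  next
    case False
    then have sk: "Suc k < length ks" using Suc.prems by simp
    show ?thesis
    proof (cases "ks!Suc k = Fwd")
      case True
      then have "ns!Suc k \<in> anc Ds (insert (last ns) C)" using Suc.hyps(1)[of "Suc k"] Suc.hyps(2) sk by simp
      then show ?thesis using e anc_step by metis
    next
      case nb: False
      have "iscol (lft ns ks (Suc k)) (rgt ns ks (Suc k))"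
        using nb sk Suc.prems len by (cases "ks!Suc k") (auto simp: iscol_def lft_def rgt_def)
      then have "ns!Suc k \<in> anc Ds C" using op sk len unfolding okl_def by auto
      then have "ns!Suc k \<in> anc Ds (insert (last ns) C)" using anc_mono[of C "insert (last ns) C" Ds] by auto
      then show ?thesis using e anc_step by metis
    qed
  qed
qed

lemma cat_hd_last: "ns1 \<noteq> [] \<Longrightarrow> ns2 \<noteq> [] \<Longrightarrow> last ns1 = hd ns2 \<Longrightarrow>
   hd (ns1 @ tl ns2) = hd ns1 \<and> last (ns1 @ tl ns2) = last ns2"
  by (cases ns2) auto

lemma splice:
  assumes w1: "is_walk Ds Bs ns1 ks1" and w2: "is_walk Ds Bs ns2 ks2"
    and i: "i \<le> length ks1" and hX: "ns1!i = X" and hd2: "hd ns2 = X"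
    and pre: "\<forall>k<i. okl Ds C (lft ns1 ks1 k) (ns1!k) (rgt ns1 ks1 k)"
    and hd1: "hd ns1 \<notin> C"
    and junc: "okl Ds C (lft ns1 ks1 i) X (rgt ns2 ks2 0)"
    and post: "\<forall>m. 0 < m \<longrightarrow> m < length ns2 \<longrightarrow> okl Ds C (lft ns2 ks2 m) (ns2!m) (rgt ns2 ks2 m)"
    and last2: "last ns2 \<notin> C"
  shows "is_walk Ds Bs (take (Suc i) ns1 @ tl ns2) (take i ks1 @ ks2) \<and>
     hd (take (Suc i) ns1 @ tl ns2) = hd ns1 \<and> last (take (Suc i) ns1 @ tl ns2) = last ns2 \<and>
     opn Ds C (take (Suc i) ns1 @ tl ns2) (take i ks1 @ ks2)"
proof -
  let ?P = "take (Suc i) ns1" and ?KP = "take i ks1"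
  have l1: "length ns1 = Suc (length ks1)" using w1 by (simp add: is_walk_def)
  have l2: "length ns2 = Suc (length ks2)" using w2 by (simp add: is_walk_def)
  have wP: "is_walk Ds Bs ?P ?KP" using take_walk[OF w1 i] .
  have lP: "length ?P = Suc (length ?KP)" "length ?KP = i" using l1 i by auto
  have ne1: "?P \<noteq> []" and ne2: "ns2 \<noteq> []" using lP l2 by auto
  have lastP: "last ?P = hd ns2"
    using walk_last[OF wP] lP hX hd2 by simp
  have hdP: "hd ?P = hd ns1" using l1 by (cases ns1) auto
  have w: "is_walk Ds Bs (?P @ tl ns2) (?KP @ ks2)" using cat_walk[OF wP w2 lastP] .
  have hl: "hd (?P @ tl ns2) = hd ns1" "last (?P @ tl ns2) = last ns2"
    using cat_hd_last[OF ne1 ne2 lastP] hdP by auto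
  have ok: "okl Ds C (lft (?P @ tl ns2) (?KP @ ks2) k) ((?P @ tl ns2)!k) (rgt (?P @ tl ns2) (?KP @ ks2) k)"
    if k: "k < length (?P @ tl ns2)" for k
  proof -
    consider "k < i" | "k = i" | "i < k" by linarith
    then show ?thesis
    proof cases
      case 1
      have "lft (?P @ tl ns2) (?KP @ ks2) k = lft ns1 ks1 k"
        using cat_lft1[OF lP(1), of k] take_lft[of k i ks1 ns1] lP 1 i by simp
      moreover have "rgt (?P @ tl ns2) (?KP @ ks2) k = rgt ns1 ks1 k"
        using cat_rgt1[OF lP(1), of k] take_rgt[of k i ks1 ns1] lP 1 i by simp
      moreover have "(?P @ tl ns2)!k = ns1!k"
        using cat_nth1[OF lP(1), of k] lP 1 by simp
      ultimately show ?thesis using pre 1 by simp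
    next
      case 2
      have "lft (?P @ tl ns2) (?KP @ ks2) k = lft ns1 ks1 k"
        using cat_lft1[OF lP(1), of k] take_lft[of k i ks1 ns1] lP 2 i by simp
      moreover have "rgt (?P @ tl ns2) (?KP @ ks2) k = rgt ns2 ks2 0"
        using cat_rgt2[OF lP(1) lastP ne2, of k] lP 2 by simp
      moreover have "(?P @ tl ns2)!k = X"
        using cat_nth1[OF lP(1), of k] lP 2 hX by simp
      ultimately show ?thesis using junc 2 by simp
    next
      case 3
      have "lft (?P @ tl ns2) (?KP @ ks2) k = lft ns2 ks2 (k - i)"
        using cat_lft2[OF lP(1) lastP ne2, of k] lP 3 by simp
      moreover have "rgt (?P @ tl ns2) (?KP @ ks2) k = rgt ns2 ks2 (k - i)"
        using cat_rgt2[OF lP(1) lastP ne2, of k] lP 3 by simp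
      moreover have "(?P @ tl ns2)!k = ns2!(k - i)"
        using cat_nth2[OF lP(1) lastP ne2, of k] lP 3 by simp
      moreover have "0 < k - i" "k - i < length ns2" using 3 k lP l2 by auto
      ultimately show ?thesis using post by simp
    qed
  qed
  show ?thesis using w hl ok hd1 last2 unfolding opn_def by auto
qed

lemma sep_contra: "sigma_sep Ds Bs a b C \<Longrightarrow> is_walk Ds Bs ns ks \<Longrightarrow> hd ns = a \<Longrightarrow> last ns = b \<Longrightarrow>
   opn Ds C ns ks \<Longrightarrow> False"
  unfolding sigma_sep_def using open_iff walk_len by metis

lemma nsep_get: "\<not> sigma_sep Ds Bs a b C \<Longrightarrow>
   \<exists>ns ks. is_walk Ds Bs ns ks \<and> hd ns = a \<and> last ns = b \<and> opn Ds C ns ks"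
  unfolding sigma_sep_def using open_iff walk_len by metis



theorem proposition3:
  fixes Vs :: "'v set" and Ds Bs :: "('v \<times> 'v) set"
    and indep :: "'v \<Rightarrow> 'v \<Rightarrow> 'v set \<Rightarrow> bool"
    and S :: "'v set" and V W X Y :: 'v
  assumes G: "dmg Vs Ds Bs"
    and faithful: "\<And>a b C. a \<in> Vs \<Longrightarrow> b \<in> Vs \<Longrightarrow> C \<subseteq> Vs \<Longrightarrow> a \<noteq> b \<Longrightarrow>
                      a \<notin> C \<Longrightarrow> b \<notin> C \<Longrightarrow> indep a b C \<longleftrightarrow> sigma_sep Ds Bs a b C"
    and S_sub: "S \<subseteq> Vs"
    and in_V: "V \<in> Vs" "W \<in> Vs" "X \<in> Vs" "Y \<in> Vs"
    and notS: "V \<notin> S" "W \<notin> S" "X \<notin> S" "Y \<notin> S"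
    and distinct: "distinct [V, W, X, Y]"
    and ci1: "indep V Y (S \<union> {X})" "\<not> indep V Y S"
    and ci2: "\<not> indep V W (S \<union> {X})" "indep V W S"
  shows "X \<in> anc Ds {Y} \<and> Y \<notin> anc Ds {X} \<and> X \<notin> anc Ds S \<and> (X, Y) \<notin> Bs"
proof -
  have SX: "S \<union> {X} = insert X S" by auto
  have SXsub: "insert X S \<subseteq> Vs" using S_sub in_V by auto
  have d: "V \<noteq> W" "V \<noteq> X" "V \<noteq> Y" "W \<noteq> X" "W \<noteq> Y" "X \<noteq> Y" using distinct by auto
  have sep1: "sigma_sep Ds Bs V Y (insert X S)"
    using faithful[OF in_V(1) in_V(4) SXsub] ci1(1) d notS unfolding SX by auto
  have nsep1: "\<not> sigma_sep Ds Bs V Y S"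
    using faithful[OF in_V(1) in_V(4) S_sub] ci1(2) d notS by auto
  have nsep2: "\<not> sigma_sep Ds Bs V W (insert X S)"
    using faithful[OF in_V(1) in_V(2) SXsub] ci2(1) d notS unfolding SX by auto
  have sep2: "sigma_sep Ds Bs V W S"
    using faithful[OF in_V(1) in_V(2) S_sub] ci2(2) d notS by auto
  obtain ns1 ks1 where p1: "is_walk Ds Bs ns1 ks1" "hd ns1 = V" "last ns1 = Y" "opn Ds S ns1 ks1"
    using nsep_get[OF nsep1] by blast
  obtain ns2 ks2 where p2: "is_walk Ds Bs ns2 ks2" "hd ns2 = V" "last ns2 = W" "opn Ds (insert X S) ns2 ks2"
    using nsep_get[OF nsep2] by blast
  have l1: "length ns1 = Suc (length ks1)" using p1 walk_len by blast
  have l2: "length ns2 = Suc (length ks2)" using p2 walk_len by blast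
  have ok1: "\<forall>k<length ns1. okl Ds S (lft ns1 ks1 k) (ns1!k) (rgt ns1 ks1 k)" using p1 opn_def by blast
  have ok2: "\<forall>k<length ns2. okl Ds (insert X S) (lft ns2 ks2 k) (ns2!k) (rgt ns2 ks2 k)" using p2 opn_def by blast

  have nA: "X \<notin> anc Ds S"
  proof
    assume a: "X \<in> anc Ds S"
    have "opn Ds S ns2 ks2" unfolding opn_def
    proof (intro conjI allI impI)
      show "hd ns2 \<notin> S" "last ns2 \<notin> S" using p2 notS by auto
      fix k assume k: "k < length ns2"
      show "okl Ds S (lft ns2 ks2 k) (ns2!k) (rgt ns2 ks2 k)"
      proof -
        have o: "okl Ds (insert X S) (lft ns2 ks2 k) (ns2!k) (rgt ns2 ks2 k)" using ok2 k by blast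
        then show ?thesis unfolding okl_def anc_insert_absorb[OF a] by auto
      qed
    qed
    then show False using sep_contra[OF sep2 p2(1-3)] by blast
  qed

  have nV: "X \<notin> anc Ds {V}"
  proof
    assume hX: "X \<in> anc Ds {V}"
    then have XV: "(X, V) \<in> Ds\<^sup>*" by (simp add: anc_def)
    have nopn: "\<not> opn Ds S ns2 ks2" using sep_contra[OF sep2 p2(1-3)] by blast
    define K where "K = {k. k < length ns2 \<and> iscol (lft ns2 ks2 k) (rgt ns2 ks2 k) \<and> ns2!k \<notin> anc Ds S}"
    have "\<exists>k<length ns2. \<not> okl Ds S (lft ns2 ks2 k) (ns2!k) (rgt ns2 ks2 k)"
      using nopn p2 notS unfolding opn_def by auto
    then obtain k0 where k0: "k0 < length ns2" "\<not> okl Ds S (lft ns2 ks2 k0) (ns2!k0) (rgt ns2 ks2 k0)" by blast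
    have o: "okl Ds (insert X S) (lft ns2 ks2 k0) (ns2!k0) (rgt ns2 ks2 k0)" using ok2 k0 by blast
    have "k0 \<in> K" using k0 okl_down[OF o] unfolding K_def by blast
    then have Kne: "K \<noteq> {}" by blast
    have Kfin: "finite K" unfolding K_def by auto
    define kc where "kc = Max K"
    have kcK: "kc \<in> K" using Kne Kfin kc_def by simp
    have kcmax: "\<And>k. k \<in> K \<Longrightarrow> k \<le> kc" using Kfin kc_def by simp
    have col: "iscol (lft ns2 ks2 kc) (rgt ns2 ks2 kc)" and kcl: "kc < length ns2"
      and cnS: "ns2!kc \<notin> anc Ds S" using kcK K_def by auto
    have kcks: "kc < length ks2" using col by (auto simp: iscol_def rgt_def split: if_splits)
    have okc: "okl Ds (insert X S) (lft ns2 ks2 kc) (ns2!kc) (rgt ns2 ks2 kc)" using ok2 kcl by blast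
    have "ns2!kc \<in> anc Ds (insert X S)" using okc col unfolding okl_def by blast
    then have cX: "(ns2!kc, X) \<in> Ds\<^sup>*" using cnS unfolding anc_def by auto
    then have cV: "(ns2!kc, V) \<in> Ds\<^sup>*" using XV by (rule rtrancl_trans)
    obtain p where p: "p \<noteq> []" "hd p = V" "last p = ns2!kc"
        "is_walk Ds Bs p (replicate (length p - 1) Bwd)" "\<forall>z\<in>set p. (ns2!kc, z) \<in> Ds\<^sup>*"
      using bwd_path[OF cV, of Bs] by blast
    define kp where "kp = replicate (length p - 1) Bwd"
    have lp: "length p = Suc (length kp)" using p(1) kp_def by simp
    have pnS: "\<And>z. z \<in> set p \<Longrightarrow> z \<notin> S"
    proof
      fix z assume "z \<in> set p" "z \<in> S"
      then have "ns2!kc \<in> anc Ds S" using p(5) unfolding anc_def by blast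
      then show False using cnS by blast
    qed
    have pncol: "\<not> iscol (lft p kp k) r" if "k \<le> length kp" for k r
      using that by (auto simp: iscol_def lft_def kp_def)
    have wD: "is_walk Ds Bs (drop kc ns2) (drop kc ks2)" using drop_walk[OF p2(1)] kcks by simp
    have hdD: "hd (drop kc ns2) = ns2!kc" using kcl by (simp add: hd_drop_conv_nth)
    have lastD: "last (drop kc ns2) = W" using p2(3) kcl by simp
    have lastp: "p ! length kp = ns2!kc" using p(3) walk_last[OF p(4)] kp_def by simp
    have sp: "is_walk Ds Bs (take (Suc (length kp)) p @ tl (drop kc ns2)) (take (length kp) kp @ drop kc ks2) \<and>
     hd (take (Suc (length kp)) p @ tl (drop kc ns2)) = hd p \<and>
     last (take (Suc (length kp)) p @ tl (drop kc ns2)) = last (drop kc ns2) \<and>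
     opn Ds S (take (Suc (length kp)) p @ tl (drop kc ns2)) (take (length kp) kp @ drop kc ks2)"
    proof (rule splice[OF p(4)[folded kp_def] wD order_refl lastp hdD])
      show "\<forall>k<length kp. okl Ds S (lft p kp k) (p ! k) (rgt p kp k)"
        using pncol pnS lp unfolding okl_def by auto
      show "hd p \<notin> S" using p notS by auto
      show "okl Ds S (lft p kp (length kp)) (ns2 ! kc) (rgt (drop kc ns2) (drop kc ks2) 0)"
      proof -
        have "ns2!kc \<in> set p" using p(1) p(3) last_in_set by metis
        then show ?thesis using pncol[OF order_refl] pnS unfolding okl_def by blast
      qed
      show "last (drop kc ns2) \<notin> S" using lastD notS by simp
      show "\<forall>m. 0 < m \<longrightarrow> m < length (drop kc ns2) \<longrightarrow>
          okl Ds S (lft (drop kc ns2) (drop kc ks2) m) (drop kc ns2 ! m) (rgt (drop kc ns2) (drop kc ks2) m)"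
      proof (intro allI impI)
        fix m assume m: "0 < m" "m < length (drop kc ns2)"
        have e: "lft (drop kc ns2) (drop kc ks2) m = lft ns2 ks2 (kc + m)"
          "rgt (drop kc ns2) (drop kc ks2) m = rgt ns2 ks2 (kc + m)"
          "drop kc ns2 ! m = ns2 ! (kc + m)"
          using drop_lft[OF m(1) l2, of kc] drop_rgt[OF l2, of kc m] kcks kcl by auto
        have km: "kc + m < length ns2" using m by simp
        have "okl Ds S (lft ns2 ks2 (kc + m)) (ns2 ! (kc + m)) (rgt ns2 ks2 (kc + m))"
        proof (rule okl_down)
          show "okl Ds (insert X S) (lft ns2 ks2 (kc + m)) (ns2 ! (kc + m)) (rgt ns2 ks2 (kc + m))"
            using ok2 km by blast
          assume "iscol (lft ns2 ks2 (kc + m)) (rgt ns2 ks2 (kc + m))"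
          then show "ns2 ! (kc + m) \<in> anc Ds S"
          proof -
            assume cc: "iscol (lft ns2 ks2 (kc + m)) (rgt ns2 ks2 (kc + m))"
            show ?thesis
            proof (rule ccontr)
              assume "ns2 ! (kc + m) \<notin> anc Ds S"
              then have "kc + m \<in> K" unfolding K_def using km cc by blast
              then show False using kcmax m(1) by fastforce
            qed
          qed
        qed
        then show "okl Ds S (lft (drop kc ns2) (drop kc ks2) m) (drop kc ns2 ! m) (rgt (drop kc ns2) (drop kc ks2) m)"
          using e by simp
      qed
    qed
    then have w: "is_walk Ds Bs (take (Suc (length kp)) p @ tl (drop kc ns2)) (take (length kp) kp @ drop kc ks2)"
      and h: "hd (take (Suc (length kp)) p @ tl (drop kc ns2)) = V"
      and l: "last (take (Suc (length kp)) p @ tl (drop kc ns2)) = W"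
      and o: "opn Ds S (take (Suc (length kp)) p @ tl (drop kc ns2)) (take (length kp) kp @ drop kc ks2)"
      using p(2) lastD by auto
    show False using sep_contra[OF sep2 w h l o] .
  qed

  have hdn: "hd ns1 \<notin> insert X S" and lastn: "last ns1 \<notin> insert X S" using p1 notS d by auto
  have Xin: "\<exists>k<length ns1. ns1!k = X"
  proof (rule ccontr)
    assume nx: "\<not> (\<exists>k<length ns1. ns1!k = X)"
    have "opn Ds (insert X S) ns1 ks1" unfolding opn_def
    proof (intro conjI allI impI)
      show "hd ns1 \<notin> insert X S" "last ns1 \<notin> insert X S" using hdn lastn by auto
      fix k assume k: "k < length ns1"
      show "okl Ds (insert X S) (lft ns1 ks1 k) (ns1!k) (rgt ns1 ks1 k)"
      proof -
        have "okl Ds S (lft ns1 ks1 k) (ns1!k) (rgt ns1 ks1 k)" using ok1 k by simp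
        then show ?thesis using k nx by (intro okl_mono1) auto
      qed
    qed
    then show False using sep_contra[OF sep1 p1(1-3)] by blast
  qed
  define i where "i = (LEAST k. k < length ns1 \<and> ns1!k = X)"
  have i: "i < length ns1 \<and> ns1!i = X" unfolding i_def by (rule LeastI_ex) (use Xin in blast)
  then have i: "i < length ns1" "ns1!i = X" by auto
  have ifirst: "\<forall>k<i. ns1!k \<noteq> X"
  proof (intro allI impI)
    fix k assume k: "k < i"
    show "ns1!k \<noteq> X"
    proof
      assume "ns1!k = X"
      then have "i \<le> k" unfolding i_def using k i(1) by (intro Least_le) simp
      then show False using k by simp
    qed
  qed
  have i0: "0 < i"
  proof (rule ccontr)
    assume "\<not> 0 < i"
    then have "i = 0" by simp
    then show False using i(2) walk_hd[OF p1(1)] p1(2) d by simp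
  qed
  have iks: "i \<le> length ks1" using i(1) l1 by simp
  have kin: "ks1!(i-1) \<noteq> Bwd"
  proof
    assume "ks1!(i-1) = Bwd"
    then have "X \<in> anc Ds (insert V S)" using bwd_anc[OF p1(1) ok1 i0 i(1)] i(2) p1(2) by simp
    then show False using nA nV unfolding anc_def by auto
  qed
  have lftX: "lft ns1 ks1 i = Some (ks1!(i-1), ns1!(i-1))" using i0 by (simp add: lft_def)
  have kin2: "ks1!(i-1) \<in> {Fwd, Bid}" using kin by (cases "ks1!(i-1)") auto
  have preok: "\<forall>k<i. okl Ds (insert X S) (lft ns1 ks1 k) (ns1!k) (rgt ns1 ks1 k)"
  proof (intro allI impI)
    fix k assume k: "k < i"
    have "okl Ds S (lft ns1 ks1 k) (ns1!k) (rgt ns1 ks1 k)" using ok1 k i(1) by simp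
    then show "okl Ds (insert X S) (lft ns1 ks1 k) (ns1!k) (rgt ns1 ks1 k)" using ifirst k by (intro okl_mono1) auto
  qed
  have Xa: "X \<in> anc Ds (insert X S)" by (simp add: anc_self)

  have aY: "X \<in> anc Ds {Y}"
  proof (rule ccontr)
    assume nY: "X \<notin> anc Ds {Y}"
    define J where "J = {k. k < length ns1 \<and> ns1!k = X}"
    have Jfin: "finite J" unfolding J_def by auto
    have Jne: "i \<in> J" unfolding J_def using i by auto
    define j where "j = Max J"
    have jJ: "j \<in> J" using Jfin Jne j_def by (metis Max_in empty_iff)
    have jmax: "\<And>k. k \<in> J \<Longrightarrow> k \<le> j" using Jfin j_def by simp
    have jl: "j < length ns1" "ns1!j = X" using jJ J_def by auto
    have jks: "j < length ks1"
    proof (rule ccontr)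
      assume "\<not> j < length ks1"
      then have "j = length ks1" using jl l1 by simp
      then show False using jl walk_last[OF p1(1)] p1(3) d by simp
    qed
    have kj: "ks1!j \<noteq> Fwd"
    proof
      assume "ks1!j = Fwd"
      then have "X \<in> anc Ds (insert Y S)" using fwd_anc[OF p1(1) ok1 jks] jl p1(3) by simp
      then show False using nA nY unfolding anc_def by auto
    qed
    have kj2: "ks1!j \<in> {Bwd, Bid}" using kj by (cases "ks1!j") auto
    have wD: "is_walk Ds Bs (drop j ns1) (drop j ks1)" using drop_walk[OF p1(1)] jks by simp
    have hdD: "hd (drop j ns1) = X" using jl by (simp add: hd_drop_conv_nth)
    have lastD: "last (drop j ns1) = Y" using p1(3) jl by simp
    have rj: "rgt (drop j ns1) (drop j ks1) 0 = Some (ks1!j, ns1!Suc j)"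
      using drop_rgt[OF l1, of j 0] jks by (simp add: rgt_def)
    have junc: "okl Ds (insert X S) (lft ns1 ks1 i) X (rgt (drop j ns1) (drop j ks1) 0)"
      using lftX rj kin2 kj2 Xa unfolding okl_def iscol_def by auto
    have post: "\<forall>m. 0 < m \<longrightarrow> m < length (drop j ns1) \<longrightarrow>
          okl Ds (insert X S) (lft (drop j ns1) (drop j ks1) m) (drop j ns1 ! m) (rgt (drop j ns1) (drop j ks1) m)"
    proof (intro allI impI)
      fix m assume m: "0 < m" "m < length (drop j ns1)"
      have e: "lft (drop j ns1) (drop j ks1) m = lft ns1 ks1 (j + m)"
          "rgt (drop j ns1) (drop j ks1) m = rgt ns1 ks1 (j + m)"
          "drop j ns1 ! m = ns1 ! (j + m)"
        using drop_lft[OF m(1) l1, of j] drop_rgt[OF l1, of j m] jks jl by auto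
      have km: "j + m < length ns1" using m by simp
      have nx: "ns1 ! (j + m) \<noteq> X"
      proof
        assume "ns1 ! (j + m) = X"
        then have "j + m \<in> J" unfolding J_def using km by blast
        then show False using jmax m(1) by fastforce
      qed
      show "okl Ds (insert X S) (lft (drop j ns1) (drop j ks1) m) (drop j ns1 ! m) (rgt (drop j ns1) (drop j ks1) m)"
        using okl_mono1[OF _ nx] ok1 km e by simp
    qed
    have sp: "is_walk Ds Bs (take (Suc i) ns1 @ tl (drop j ns1)) (take i ks1 @ drop j ks1) \<and>
     hd (take (Suc i) ns1 @ tl (drop j ns1)) = hd ns1 \<and> last (take (Suc i) ns1 @ tl (drop j ns1)) = last (drop j ns1) \<and>
     opn Ds (insert X S) (take (Suc i) ns1 @ tl (drop j ns1)) (take i ks1 @ drop j ks1)"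
      by (rule splice[OF p1(1) wD iks i(2) hdD preok hdn junc post]) (use lastD d notS in auto)
    then have w: "is_walk Ds Bs (take (Suc i) ns1 @ tl (drop j ns1)) (take i ks1 @ drop j ks1)"
      and h: "hd (take (Suc i) ns1 @ tl (drop j ns1)) = V"
      and l: "last (take (Suc i) ns1 @ tl (drop j ns1)) = Y"
      and o: "opn Ds (insert X S) (take (Suc i) ns1 @ tl (drop j ns1)) (take i ks1 @ drop j ks1)"
      using p1(2) lastD by auto
    show False using sep_contra[OF sep1 w h l o] .
  qed

  have nYX: "Y \<notin> anc Ds {X}"
  proof
    assume "Y \<in> anc Ds {X}"
    then have YX: "(Y, X) \<in> Ds\<^sup>*" by (simp add: anc_def)
    have XY: "(X, Y) \<in> Ds\<^sup>*" using aY by (simp add: anc_def)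
    obtain q where q: "q \<noteq> []" "hd q = X" "last q = Y"
        "is_walk Ds Bs q (replicate (length q - 1) Fwd)" "\<forall>z\<in>set q. (X,z) \<in> Ds\<^sup>* \<and> (z,Y) \<in> Ds\<^sup>*"
      using fwd_path[OF XY, of Bs] by blast
    define kq where "kq = replicate (length q - 1) Fwd"
    have lq: "length q = Suc (length kq)" using q(1) kq_def by simp
    have reach: "(z, z') \<in> Ds\<^sup>*" if "z \<in> set q" "z' \<in> set q" for z z'
    proof -
      have a: "(z,Y) \<in> Ds\<^sup>*" "(X,z') \<in> Ds\<^sup>*" using q(5) that by auto
      show ?thesis using rtrancl_trans[OF rtrancl_trans[OF a(1) YX] a(2)] .
    qed
    have scc: "\<And>z z'. z \<in> set q \<Longrightarrow> z' \<in> set q \<Longrightarrow> same_scc Ds z z'"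
      unfolding same_scc_def using reach by blast
    have kq0: "0 < length kq"
    proof (rule ccontr)
      assume "\<not> 0 < length kq"
      then have "length q = 1" using lq by simp
      then have "hd q = last q" by (cases q) auto
      then show False using q(2,3) d by simp
    qed
    have q0: "q!0 = X" using q(1,2) by (simp add: hd_conv_nth)
    have junc: "okl Ds (insert X S) (lft ns1 ks1 i) X (rgt q kq 0)"
    proof -
      have r: "rgt q kq 0 = Some (Fwd, q!1)" using kq0 kq_def by (simp add: rgt_def)
      have m1: "q!1 \<in> set q" using lq kq0 by (intro nth_mem) simp
      have m0: "X \<in> set q" using q0 lq nth_mem[of 0 q] by simp
      have sc: "same_scc Ds X (q!1)" using scc[OF m0 m1] .
      have nc: "\<not> iscol (lft ns1 ks1 i) (rgt q kq 0)" using r by (simp add: iscol_def)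
      have nb: "\<not> blk Ds (lft ns1 ks1 i) X (rgt q kq 0)" using r lftX kin sc by (simp add: blk_def)
      show ?thesis using nc nb by (simp add: okl_def)
    qed
    have post: "\<forall>m. 0 < m \<longrightarrow> m < length q \<longrightarrow> okl Ds (insert X S) (lft q kq m) (q!m) (rgt q kq m)"
    proof (intro allI impI)
      fix m assume m: "0 < m" "m < length q"
      have mk: "m - 1 < length kq" using m lq by simp
      then have "kq!(m-1) = Fwd" unfolding kq_def by simp
      then have l: "lft q kq m = Some (Fwd, q!(m-1))" using m by (simp add: lft_def)
      have nc: "\<not> iscol (lft q kq m) (rgt q kq m)"
        using l by (simp add: iscol_def rgt_def kq_def)
      have nb: "\<not> blk Ds (lft q kq m) (q!m) (rgt q kq m)"
      proof (cases "m < length kq")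
        case True
        have "q!m \<in> set q" "q!Suc m \<in> set q" using True lq m by (auto intro!: nth_mem)
        then have "same_scc Ds (q!m) (q!Suc m)" by (rule scc)
        then show ?thesis using True l kq_def by (simp add: blk_def rgt_def)
      next
        case False
        then show ?thesis using l by (simp add: blk_def rgt_def)
      qed
      show "okl Ds (insert X S) (lft q kq m) (q!m) (rgt q kq m)" using nc nb unfolding okl_def by blast
    qed
    have sp: "is_walk Ds Bs (take (Suc i) ns1 @ tl q) (take i ks1 @ kq) \<and>
     hd (take (Suc i) ns1 @ tl q) = hd ns1 \<and> last (take (Suc i) ns1 @ tl q) = last q \<and>
     opn Ds (insert X S) (take (Suc i) ns1 @ tl q) (take i ks1 @ kq)"
      by (rule splice[OF p1(1) q(4)[folded kq_def] iks i(2) q(2) preok hdn junc post]) (use q(3) d notS in auto)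
    then have w: "is_walk Ds Bs (take (Suc i) ns1 @ tl q) (take i ks1 @ kq)"
      and h: "hd (take (Suc i) ns1 @ tl q) = V"
      and l: "last (take (Suc i) ns1 @ tl q) = Y"
      and o: "opn Ds (insert X S) (take (Suc i) ns1 @ tl q) (take i ks1 @ kq)"
      using p1(2) q(3) by auto
    show False using sep_contra[OF sep1 w h l o] .
  qed

  have nB: "(X, Y) \<notin> Bs"
  proof
    assume B: "(X, Y) \<in> Bs"
    have wq: "is_walk Ds Bs [X, Y] [Bid]" using B by (simp add: is_walk_def)
    have junc: "okl Ds (insert X S) (lft ns1 ks1 i) X (rgt [X, Y] [Bid] 0)"
      using lftX kin2 Xa unfolding okl_def iscol_def by (auto simp: rgt_def)
    have post: "\<forall>m. 0 < m \<longrightarrow> m < length [X, Y] \<longrightarrow> okl Ds (insert X S) (lft [X, Y] [Bid] m) ([X, Y]!m) (rgt [X, Y] [Bid] m)"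
    proof (intro allI impI)
      fix m :: nat assume m: "0 < m" "m < length [X, Y]"
      then have m1: "m = 1" by simp
      show "okl Ds (insert X S) (lft [X, Y] [Bid] m) ([X, Y]!m) (rgt [X, Y] [Bid] m)"
        using m1 d notS by (simp add: okl_def iscol_def rgt_def lft_def)
    qed
    have sp: "is_walk Ds Bs (take (Suc i) ns1 @ tl [X, Y]) (take i ks1 @ [Bid]) \<and>
     hd (take (Suc i) ns1 @ tl [X, Y]) = hd ns1 \<and> last (take (Suc i) ns1 @ tl [X, Y]) = last [X, Y] \<and>
     opn Ds (insert X S) (take (Suc i) ns1 @ tl [X, Y]) (take i ks1 @ [Bid])"
      by (rule splice[OF p1(1) wq iks i(2) _ preok hdn junc post]) (use d notS in auto)
    then have w: "is_walk Ds Bs (take (Suc i) ns1 @ tl [X, Y]) (take i ks1 @ [Bid])"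
      and h: "hd (take (Suc i) ns1 @ tl [X, Y]) = V"
      and l: "last (take (Suc i) ns1 @ tl [X, Y]) = Y"
      and o: "opn Ds (insert X S) (take (Suc i) ns1 @ tl [X, Y]) (take i ks1 @ [Bid])"
      using p1(2) by auto
    show False using sep_contra[OF sep1 w h l o] .
  qed
  show ?thesis by (intro conjI aY nYX nA nB)
qed

end
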